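(* Let $\mathcal A_{IV}$ be the algebra of Laurent polynomials in $a_{IV},b_{IV},c_{IV},d_{IV},e_{IV},f_{IV},h_{IV}$ with the log-canonical bracket (writing $a,\dots,h$ for the $IV$-variables) $\{a,b\}=0,\ \{a,c\}=-\tfrac12 ac,\ \{a,d\}=-\tfrac12 ad,\ \{a,e\}=0,\ \{a,f\}=\tfrac12 af,\ \{a,h\}=\tfrac12 ah,$ $\{b,c\}=\tfrac14 bc,\ \{b,d\}=0,\ \{b,e\}=\tfrac14 be,\ \{b,f\}=\tfrac14 bf,\ \{b,h\}=-\tfrac14 bh,$ $\{c,d\}=-\tfrac14 cd,\ \{c,e\}=\tfrac14 ce,\ \{c,f\}=0,\ \{c,h\}=\tfrac14 ch,$ $\{d,e\}=-\tfrac14 de,\ \{d,f\}=\tfrac14 df,\ \{d,h\}=\tfrac14 dh,\ \{e,f\}=-\tfrac14 ef,\ \{e,h\}=0,\ \{f,h\}=\tfrac14 fh$. Let $\mathcal A_{II}$ be the algebra of Laurent polynomials in $a,b,c,d,e,f,g,h,i$ with the log-canonical bracket $\{a,b\}=0,\ \{a,c\}=-\tfrac14 ac,\ \{a,d\}=-\tfrac14 ad,\ \{a,e\}=0,\ \{a,f\}=\tfrac14 af,\ \{a,g\}=-\tfrac14 ag,\ \{a,h\}=\tfrac14 ah,\ \{a,i\}=\tfrac14 ai,$ $\{b,c\}=\tfrac14 bc,\ \{b,d\}=0,\ \{b,e\}=\tfrac14 be,\ \{b,f\}=\tfrac14 bf,\ \{b,g\}=0,\ \{b,h\}=-\tfrac14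 bh,\ \{b,i\}=0,$ $\{c,d\}=-\tfrac14 cd,\ \{c,e\}=\tfrac14 ce,\ \{c,f\}=-\tfrac14 cf,\ \{c,g\}=\{c,h\}=0,\ \{c,i\}=\tfrac14 ci,$ $\{d,e\}=-\tfrac14 de,\ \{d,f\}=\{d,g\}=\{d,h\}=0,\ \{d,i\}=\tfrac14 di,$ $\{e,f\}=-\tfrac14 ef,\ \{e,g\}=\{e,h\}=\{e,i\}=0,$ $\{f,g\}=-\tfrac14 fg,\ \{f,h\}=\tfrac14 fh,\ \{f,i\}=0,\ \{g,h\}=\tfrac14 gh,\ \{g,i\}=-\tfrac14 gi,\ \{h,i\}=0$. Then the assignment $a_{IV}\mapsto ag$, $b_{IV}\mapsto b$, $c_{IV}\mapsto cg$, $d_{IV}\mapsto dg$, $e_{IV}\mapsto e$, $f_{IV}\mapsto f$, $h_{IV}\mapsto h$ defines an injective Poisson homomorphism $\mathcal A_{IV}\to\mathcal A_{II}$, realising $\mathcal A_{IV}$ as a Poisson subalgebra of $\mathcal A_{II}$.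
   Context: A log-canonical bracket is extended from the generators to all Laurent polynomials by bilinearity, antisymmetry and the Leibniz rule. *)

theory Defs
  imports Main "HOL-Library.Poly_Mapping"
begin

(* Laurent polynomials in variables indexed by a type 'v, with coefficients in 'k:
  finitely supported maps from integer exponent vectors ('v \<Rightarrow>\<^sub>0 int) to 'k.
  Multiplication is the convolution product of Poly_Mapping (adding exponents). *)

type_synonym ('v, 'k) lpoly = "('v \<Rightarrow>\<^sub>0 int) \<Rightarrow>\<^sub>0 'k"

definition lmonom :: "('v \<Rightarrow>\<^sub>0 int) \<Rightarrow> ('v, 'k::comm_ring_1) lpoly" where
  "lmonom \<alpha> = Poly_Mapping.single \<alpha> 1"

definition lvar :: "'v \<Rightarrow> ('v, 'k::comm_ring_1) lpoly" where
  "lvar v = lmonom (Poly_Mapping.single v 1)"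

(* Log-canonical bracket with structure matrix w: on generators
  {x_i, x_j} = w i j * x_i * x_j; its extension by bilinearity and the Leibniz rule
  gives {x^\<alpha>, x^\<beta>} = (\<Sum>_{i,j} \<alpha>_i \<beta>_j w i j) x^(\<alpha>+\<beta>). *)

definition lc_pair :: "('v \<Rightarrow> 'v \<Rightarrow> 'k::comm_ring_1) \<Rightarrow> ('v \<Rightarrow>\<^sub>0 int) \<Rightarrow> ('v \<Rightarrow>\<^sub>0 int) \<Rightarrow> 'k" where
  "lc_pair w \<alpha> \<beta> = (\<Sum>i\<in>Poly_Mapping.keys \<alpha>. \<Sum>j\<in>Poly_Mapping.keys \<beta>.
      of_int (Poly_Mapping.lookup \<alpha> i * Poly_Mapping.lookup \<beta> j) * w i j)"

definition lc_bracket :: "('v \<Rightarrow> 'v \<Rightarrow> 'k::comm_ring_1) \<Rightarrow> ('v, 'k) lpoly \<Rightarrow> ('v, 'k) lpoly \<Rightarrow> ('v, 'k) lpoly" where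
  "lc_bracket w p q = (\<Sum>\<alpha>\<in>Poly_Mapping.keys p. \<Sum>\<beta>\<in>Poly_Mapping.keys q.
      Poly_Mapping.single (\<alpha> + \<beta>) (Poly_Mapping.lookup p \<alpha> * Poly_Mapping.lookup q \<beta> * lc_pair w \<alpha> \<beta>))"

datatype V4 = a4 | b4 | c4 | d4 | e4 | f4 | h4

fun idx4 :: "V4 \<Rightarrow> nat" where
  "idx4 a4 = 0" | "idx4 b4 = 1" | "idx4 c4 = 2" | "idx4 d4 = 3" | "idx4 e4 = 4" | "idx4 f4 = 5" | "idx4 h4 = 6"

fun w4u :: "V4 \<Rightarrow> V4 \<Rightarrow> 'k::field" where
  "w4u a4 c4 = - 1/2" | "w4u a4 d4 = - 1/2" | "w4u a4 f4 = 1/2" | "w4u a4 h4 = 1/2"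
| "w4u b4 c4 = 1/4" | "w4u b4 e4 = 1/4" | "w4u b4 f4 = 1/4" | "w4u b4 h4 = - 1/4"
| "w4u c4 d4 = - 1/4" | "w4u c4 e4 = 1/4" | "w4u c4 h4 = 1/4"
| "w4u d4 e4 = - 1/4" | "w4u d4 f4 = 1/4" | "w4u d4 h4 = 1/4"
| "w4u e4 f4 = - 1/4" | "w4u f4 h4 = 1/4"
| "w4u _ _ = 0"

definition w4 :: "V4 \<Rightarrow> V4 \<Rightarrow> 'k::field" where
  "w4 x y = (if idx4 x < idx4 y then w4u x y else if idx4 y < idx4 x then - w4u y x else 0)"

datatype V2 = a2 | b2 | c2 | d2 | e2 | f2 | g2 | h2 | i2

fun idx2 :: "V2 \<Rightarrow> nat" where
  "idx2 a2 = 0" | "idx2 b2 = 1" | "idx2 c2 = 2" | "idx2 d2 = 3" | "idx2 e2 = 4" | "idx2 f2 = 5"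
| "idx2 g2 = 6" | "idx2 h2 = 7" | "idx2 i2 = 8"

fun w2u :: "V2 \<Rightarrow> V2 \<Rightarrow> 'k::field" where
  "w2u a2 c2 = - 1/4" | "w2u a2 d2 = - 1/4" | "w2u a2 f2 = 1/4" | "w2u a2 g2 = - 1/4"
| "w2u a2 h2 = 1/4" | "w2u a2 i2 = 1/4"
| "w2u b2 c2 = 1/4" | "w2u b2 e2 = 1/4" | "w2u b2 f2 = 1/4" | "w2u b2 h2 = - 1/4"
| "w2u c2 d2 = - 1/4" | "w2u c2 e2 = 1/4" | "w2u c2 f2 = - 1/4" | "w2u c2 i2 = 1/4"
| "w2u d2 e2 = - 1/4" | "w2u d2 i2 = 1/4"
| "w2u e2 f2 = - 1/4"
| "w2u f2 g2 = - 1/4" | "w2u f2 h2 = 1/4"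
| "w2u g2 h2 = 1/4" | "w2u g2 i2 = - 1/4"
| "w2u _ _ = 0"

definition w2 :: "V2 \<Rightarrow> V2 \<Rightarrow> 'k::field" where
  "w2 x y = (if idx2 x < idx2 y then w2u x y else if idx2 y < idx2 x then - w2u y x else 0)"

(* Exponent of the image of the monomial x^\<alpha> under
  a\<mapsto>ag, b\<mapsto>b, c\<mapsto>cg, d\<mapsto>dg, e\<mapsto>e, f\<mapsto>f, h\<mapsto>h. *)
definition exp_map :: "(V4 \<Rightarrow>\<^sub>0 int) \<Rightarrow> (V2 \<Rightarrow>\<^sub>0 int)" where
  "exp_map \<alpha> =
     Poly_Mapping.single a2 (Poly_Mapping.lookup \<alpha> a4) + Poly_Mapping.single b2 (Poly_Mapping.lookup \<alpha> b4)
   + Poly_Mapping.single c2 (Poly_Mapping.lookup \<alpha> c4) + Poly_Mapping.single d2 (Poly_Mapping.lookup \<alpha> d4)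
   + Poly_Mapping.single e2 (Poly_Mapping.lookup \<alpha> e4) + Poly_Mapping.single f2 (Poly_Mapping.lookup \<alpha> f4)
   + Poly_Mapping.single g2 (Poly_Mapping.lookup \<alpha> a4 + Poly_Mapping.lookup \<alpha> c4 + Poly_Mapping.lookup \<alpha> d4)
   + Poly_Mapping.single h2 (Poly_Mapping.lookup \<alpha> h4)"

definition phi :: "(V4, 'k::comm_ring_1) lpoly \<Rightarrow> (V2, 'k) lpoly" where
  "phi p = (\<Sum>\<alpha>\<in>Poly_Mapping.keys p. Poly_Mapping.single (exp_map \<alpha>) (Poly_Mapping.lookup p \<alpha>))"

end

theory Submission imports Defs begin

lemma V4_UNIV: "(UNIV::V4 set) = {a4,b4,c4,d4,e4,f4,h4}"
  by (auto intro: V4.exhaust)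
lemma V2_UNIV: "(UNIV::V2 set) = {a2,b2,c2,d2,e2,f2,g2,h2,i2}"
  by (auto intro: V2.exhaust)

lemma lookup_exp_map[simp]:
  fixes \<alpha> :: "V4 \<Rightarrow>\<^sub>0 int"
  shows
  "Poly_Mapping.lookup (exp_map \<alpha>) a2 = Poly_Mapping.lookup \<alpha> a4"
  "Poly_Mapping.lookup (exp_map \<alpha>) b2 = Poly_Mapping.lookup \<alpha> b4"
  "Poly_Mapping.lookup (exp_map \<alpha>) c2 = Poly_Mapping.lookup \<alpha> c4"
  "Poly_Mapping.lookup (exp_map \<alpha>) d2 = Poly_Mapping.lookup \<alpha> d4"
  "Poly_Mapping.lookup (exp_map \<alpha>) e2 = Poly_Mapping.lookup \<alpha> e4"
  "Poly_Mapping.lookup (exp_map \<alpha>) f2 = Poly_Mapping.lookup \<alpha> f4"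
  "Poly_Mapping.lookup (exp_map \<alpha>) g2 = Poly_Mapping.lookup \<alpha> a4 + Poly_Mapping.lookup \<alpha> c4 + Poly_Mapping.lookup \<alpha> d4"
  "Poly_Mapping.lookup (exp_map \<alpha>) h2 = Poly_Mapping.lookup \<alpha> h4"
  "Poly_Mapping.lookup (exp_map \<alpha>) i2 = 0"
  by (simp_all add: exp_map_def lookup_add lookup_single)

lemma exp_map_add: "exp_map (\<alpha> + \<beta>) = exp_map \<alpha> + exp_map \<beta>"
  by (rule poly_mapping_eqI) (case_tac k; simp add: lookup_add)

lemma exp_map_0: "exp_map 0 = 0"
  by (rule poly_mapping_eqI) (case_tac k; simp)

lemma inj_exp_map: "inj exp_map"
proof (rule injI)
  fix x y assume h: "exp_map x = exp_map y"
  show "x = y"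
  proof (rule poly_mapping_eqI)
    fix k show "Poly_Mapping.lookup x k = Poly_Mapping.lookup y k"
      using arg_cong[OF h, of "\<lambda>m. Poly_Mapping.lookup m a2"] arg_cong[OF h, of "\<lambda>m. Poly_Mapping.lookup m b2"]
        arg_cong[OF h, of "\<lambda>m. Poly_Mapping.lookup m c2"] arg_cong[OF h, of "\<lambda>m. Poly_Mapping.lookup m d2"]
        arg_cong[OF h, of "\<lambda>m. Poly_Mapping.lookup m e2"] arg_cong[OF h, of "\<lambda>m. Poly_Mapping.lookup m f2"]
        arg_cong[OF h, of "\<lambda>m. Poly_Mapping.lookup m h2"]
      by (cases k) simp_all
  qed
qed

lemma lookup_phi_sum:
  "Poly_Mapping.lookup (phi p) \<gamma> = (\<Sum>\<alpha>\<in>Poly_Mapping.keys p. if exp_map \<alpha> = \<gamma> then Poly_Mapping.lookup p \<alpha> else 0)"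
  by (simp add: phi_def lookup_sum lookup_single when_def)

lemma lookup_phi_exp[simp]: "Poly_Mapping.lookup (phi p) (exp_map \<alpha>) = Poly_Mapping.lookup p \<alpha>"
proof -
  have "(\<Sum>\<beta>\<in>Poly_Mapping.keys p. if exp_map \<beta> = exp_map \<alpha> then Poly_Mapping.lookup p \<beta> else 0)
      = (\<Sum>\<beta>\<in>Poly_Mapping.keys p. if \<beta> = \<alpha> then Poly_Mapping.lookup p \<beta> else 0)"
    using inj_exp_map by (intro sum.cong) (auto dest: injD)
  also have "\<dots> = Poly_Mapping.lookup p \<alpha>" by (simp add: sum.delta in_keys_iff)
  finally show ?thesis by (simp add: lookup_phi_sum)
qed

lemma lookup_phi_out: "\<gamma> \<notin> range exp_map \<Longrightarrow> Poly_Mapping.lookup (phi p) \<gamma> = 0"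
  by (auto simp: lookup_phi_sum intro!: sum.neutral)

lemma phi_add: "phi (p + q) = phi p + phi q"
proof (rule poly_mapping_eqI)
  fix k show "Poly_Mapping.lookup (phi (p + q)) k = Poly_Mapping.lookup (phi p + phi q) k"
    by (cases "k \<in> range exp_map") (auto simp: lookup_add lookup_phi_out)
qed

lemma phi_zero: "phi 0 = 0"
  by (simp add: phi_def)

lemma phi_sum: "phi (sum f A) = (\<Sum>x\<in>A. phi (f x))"
  by (induction A rule: infinite_finite_induct) (simp_all add: phi_zero phi_add)

lemma phi_single: "phi (Poly_Mapping.single \<alpha> c) = Poly_Mapping.single (exp_map \<alpha>) c"
  by (cases "c = 0") (simp_all add: phi_def)

lemma poly_expand: "p = (\<Sum>\<alpha>\<in>Poly_Mapping.keys p. Poly_Mapping.single \<alpha> (Poly_Mapping.lookup p \<alpha>))"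
proof (rule poly_mapping_eqI)
  fix k
  have "(\<Sum>\<alpha>\<in>Poly_Mapping.keys p. Poly_Mapping.lookup (Poly_Mapping.single \<alpha> (Poly_Mapping.lookup p \<alpha>)) k) = (\<Sum>\<alpha>\<in>Poly_Mapping.keys p. if \<alpha> = k then Poly_Mapping.lookup p \<alpha> else 0)"
    by (intro sum.cong) (auto simp: lookup_single when_def)
  also have "\<dots> = Poly_Mapping.lookup p k" by (simp add: sum.delta in_keys_iff)
  finally show "Poly_Mapping.lookup p k = Poly_Mapping.lookup (\<Sum>\<alpha>\<in>Poly_Mapping.keys p. Poly_Mapping.single \<alpha> (Poly_Mapping.lookup p \<alpha>)) k"
    by (simp add: lookup_sum)
qed

lemma phi_mult: "phi (p * q) = phi p * phi q"
proof -
  have pq: "p * q = (\<Sum>\<alpha>\<in>Poly_Mapping.keys p. \<Sum>\<beta>\<in>Poly_Mapping.keys q. Poly_Mapping.single (\<alpha>+\<beta>) (Poly_Mapping.lookup p \<alpha> * Poly_Mapping.lookup q \<beta>))"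
    by (subst poly_expand[of p], subst poly_expand[of q])
       (simp add: sum_distrib_left sum_distrib_right mult_single sum.swap[of _ "Poly_Mapping.keys q"])
  have "phi p * phi q = (\<Sum>\<alpha>\<in>Poly_Mapping.keys p. Poly_Mapping.single (exp_map \<alpha>) (Poly_Mapping.lookup p \<alpha>)) * (\<Sum>\<beta>\<in>Poly_Mapping.keys q. Poly_Mapping.single (exp_map \<beta>) (Poly_Mapping.lookup q \<beta>))"
    by (simp add: phi_def)
  also have "\<dots> = (\<Sum>\<alpha>\<in>Poly_Mapping.keys p. \<Sum>\<beta>\<in>Poly_Mapping.keys q. Poly_Mapping.single (exp_map (\<alpha>+\<beta>)) (Poly_Mapping.lookup p \<alpha> * Poly_Mapping.lookup q \<beta>))"
    by (simp add: sum_distrib_left sum_distrib_right mult_single exp_map_add sum.swap[of _ "Poly_Mapping.keys q"])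
  finally show ?thesis by (simp add: pq phi_sum phi_single)
qed

lemma keys_phi: "Poly_Mapping.keys (phi p) = exp_map ` Poly_Mapping.keys p"
proof
  show "Poly_Mapping.keys (phi p) \<subseteq> exp_map ` Poly_Mapping.keys p"
    using lookup_phi_out by (fastforce simp: in_keys_iff)
  show "exp_map ` Poly_Mapping.keys p \<subseteq> Poly_Mapping.keys (phi p)" by (auto simp: in_keys_iff)
qed

lemma lc_pair_UNIV:
  assumes "finite (UNIV::'v set)"
  shows "lc_pair w \<alpha> \<beta> = (\<Sum>i\<in>(UNIV::'v set). \<Sum>j\<in>UNIV. of_int (Poly_Mapping.lookup \<alpha> i * Poly_Mapping.lookup \<beta> j) * w i j)"
proof -
  have inner: "(\<Sum>j\<in>Poly_Mapping.keys \<beta>. of_int (Poly_Mapping.lookup \<alpha> i * Poly_Mapping.lookup \<beta> j) * w i j)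
     = (\<Sum>j\<in>UNIV. of_int (Poly_Mapping.lookup \<alpha> i * Poly_Mapping.lookup \<beta> j) * w i j)" for i
    by (rule sum.mono_neutral_left) (use assms in \<open>auto simp: in_keys_iff\<close>)
  have "lc_pair w \<alpha> \<beta> = (\<Sum>i\<in>Poly_Mapping.keys \<alpha>. \<Sum>j\<in>UNIV. of_int (Poly_Mapping.lookup \<alpha> i * Poly_Mapping.lookup \<beta> j) * w i j)"
    unfolding lc_pair_def inner ..
  also have "\<dots> = (\<Sum>i\<in>UNIV. \<Sum>j\<in>UNIV. of_int (Poly_Mapping.lookup \<alpha> i * Poly_Mapping.lookup \<beta> j) * w i j)"
    by (rule sum.mono_neutral_left) (use assms in \<open>auto simp: in_keys_iff\<close>)
  finally show ?thesis .
qed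

lemma pair_eq: "lc_pair (w2::V2\<Rightarrow>V2\<Rightarrow>'k::field_char_0) (exp_map \<alpha>) (exp_map \<beta>) = lc_pair w4 \<alpha> \<beta>"
proof -
  have f2: "finite (UNIV::V2 set)" by (simp add: V2_UNIV)
  have f4: "finite (UNIV::V4 set)" by (simp add: V4_UNIV)
  show ?thesis
  unfolding lc_pair_UNIV[OF f2] lc_pair_UNIV[OF f4]
  apply (simp add: V2_UNIV V4_UNIV w2_def w4_def)
  apply (simp add: field_simps)
  done
qed

lemma phi_bracket: "phi (lc_bracket (w4::V4\<Rightarrow>V4\<Rightarrow>'k::field_char_0) p q) = lc_bracket w2 (phi p) (phi q)"
proof -
  have "lc_bracket w2 (phi p) (phi q) = (\<Sum>\<alpha>\<in>Poly_Mapping.keys p. \<Sum>\<beta>\<in>Poly_Mapping.keys q.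
      Poly_Mapping.single (exp_map \<alpha> + exp_map \<beta>) (Poly_Mapping.lookup p \<alpha> * Poly_Mapping.lookup q \<beta> * lc_pair w2 (exp_map \<alpha>) (exp_map \<beta>)))"
    unfolding lc_bracket_def keys_phi
    using inj_exp_map
    by (simp add: sum.reindex[OF inj_on_subset[OF inj_exp_map subset_UNIV]] del: lookup_exp_map)
  then show ?thesis
    by (simp add: lc_bracket_def phi_sum phi_single pair_eq exp_map_add)
qed

lemma phi_lvar: "phi (lvar v :: (V4,'k::comm_ring_1) lpoly) = Poly_Mapping.single (exp_map (Poly_Mapping.single v 1)) 1"
  by (simp add: lvar_def lmonom_def phi_single)

lemma lvar2: "lvar v * lvar u = (Poly_Mapping.single (Poly_Mapping.single v 1 + Poly_Mapping.single u 1) 1 :: (V2,'k::comm_ring_1) lpoly)"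
  by (simp add: lvar_def lmonom_def mult_single)

lemma lvar1: "lvar v = (Poly_Mapping.single (Poly_Mapping.single v 1) 1 :: (V2,'k::comm_ring_1) lpoly)"
  by (simp add: lvar_def lmonom_def)

lemma em_a: "exp_map (Poly_Mapping.single a4 1) = Poly_Mapping.single a2 1 + Poly_Mapping.single g2 1"
  by (rule poly_mapping_eqI) (case_tac k; simp add: lookup_add lookup_single)
lemma em_c: "exp_map (Poly_Mapping.single c4 1) = Poly_Mapping.single c2 1 + Poly_Mapping.single g2 1"
  by (rule poly_mapping_eqI) (case_tac k; simp add: lookup_add lookup_single)
lemma em_d: "exp_map (Poly_Mapping.single d4 1) = Poly_Mapping.single d2 1 + Poly_Mapping.single g2 1"
  by (rule poly_mapping_eqI) (case_tac k; simp add: lookup_add lookup_single)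
lemma em_b: "exp_map (Poly_Mapping.single b4 1) = Poly_Mapping.single b2 1"
  by (rule poly_mapping_eqI) (case_tac k; simp add: lookup_add lookup_single)
lemma em_e: "exp_map (Poly_Mapping.single e4 1) = Poly_Mapping.single e2 1"
  by (rule poly_mapping_eqI) (case_tac k; simp add: lookup_add lookup_single)
lemma em_f: "exp_map (Poly_Mapping.single f4 1) = Poly_Mapping.single f2 1"
  by (rule poly_mapping_eqI) (case_tac k; simp add: lookup_add lookup_single)
lemma em_h: "exp_map (Poly_Mapping.single h4 1) = Poly_Mapping.single h2 1"
  by (rule poly_mapping_eqI) (case_tac k; simp add: lookup_add lookup_single)

lemma phi_inj: "inj phi"
proof (rule injI)
  fix p q :: "(V4,'k::comm_ring_1) lpoly" assume "phi p = phi q"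
  then show "p = q"
    by (intro poly_mapping_eqI) (metis lookup_phi_exp)
qed

theorem mainTheorem8:
  shows "phi (lvar a4 :: (V4, 'k::field_char_0) lpoly) = lvar a2 * lvar g2
    \<and> phi (lvar b4 :: (V4, 'k) lpoly) = lvar b2
    \<and> phi (lvar c4 :: (V4, 'k) lpoly) = lvar c2 * lvar g2
    \<and> phi (lvar d4 :: (V4, 'k) lpoly) = lvar d2 * lvar g2
    \<and> phi (lvar e4 :: (V4, 'k) lpoly) = lvar e2
    \<and> phi (lvar f4 :: (V4, 'k) lpoly) = lvar f2
    \<and> phi (lvar h4 :: (V4, 'k) lpoly) = lvar h2
    \<and> phi (1 :: (V4, 'k) lpoly) = 1
    \<and> (\<forall>p q :: (V4, 'k) lpoly. phi (p + q) = phi p + phi q)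
    \<and> (\<forall>p q :: (V4, 'k) lpoly. phi (p * q) = phi p * phi q)
    \<and> (\<forall>(c::'k) (p :: (V4, 'k) lpoly). phi (Poly_Mapping.single 0 c * p) = Poly_Mapping.single 0 c * phi p)
    \<and> (\<forall>p q :: (V4, 'k) lpoly. phi (lc_bracket w4 p q) = lc_bracket w2 (phi p) (phi q))
    \<and> inj (phi :: (V4, 'k) lpoly \<Rightarrow> (V2, 'k) lpoly)"
proof -
  have one: "phi (1 :: (V4, 'k) lpoly) = 1"
    using phi_single[of 0 "1::'k"] by (simp add: exp_map_0)
  have sm: "phi (Poly_Mapping.single 0 c * p) = Poly_Mapping.single 0 c * phi p" for c :: 'k and p :: "(V4,'k) lpoly"
    by (simp add: phi_mult phi_single exp_map_0)
  show ?thesis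
    using one sm
    by (simp add: phi_lvar lvar2 lvar1 em_a em_b em_c em_d em_e em_f em_h phi_add phi_mult phi_bracket phi_inj mult_single)
qed

end
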